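(* Let $F,\theta \geq 1$ be integers and let $\eta_0(x)$, $x \in \mathbb{Z}$, be i.i.d. uniform on $\{0,1\}^F$. For each edge $e = (x,x+1)$ let $\zeta_0(e) = H(\eta_0(x),\eta_0(x+1))$, let $(X_e)_e$ be random variables which, conditionally on $\eta_0$, are independent with $X_e$ Bernoulli with success probability $1 - \zeta_0(e)/F$, and set $\phi(e) = -\zeta_0(e)$ if $\zeta_0(e) \leq \theta$ and $\phi(e) = \zeta_0(e) + 2(X_e - \theta)$ if $\zeta_0(e) > \theta$. Then there exist $C_1 < \infty$ and $c_1 > 0$ such that for all $\epsilon > 0$ and all $N \geq 1$, $$P\Big(\sum_{e \in (-N,0)} \phi(e) \leq N(E\phi(e) - \epsilon)\Big) \leq C_1 \exp(-c_1 N \epsilon^2).$$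
   Context: $H(u,v) = \#\{i : u_i \neq v_i\}$ is the Hamming distance on $\{0,1\}^F$. Edges $(x,x+1)$ of $\mathbb{Z}$ are identified with their midpoints $x+1/2$, so $e \in (-N,0)$ ranges over the $N$ edges $(x,x+1)$ with $x = -N,\ldots,-1$. $E\phi(e)$ does not depend on $e$. *)

theory Defs
  imports "HOL-Probability.Probability"
begin

text \<open>Configurations in {0,1}^F are represented as boolean lists of length F.\<close>

definition configs :: "nat \<Rightarrow> bool list set" where
  "configs F = {v. length v = F}"

definition hamming :: "nat \<Rightarrow> bool list \<Rightarrow> bool list \<Rightarrow> nat" where
  "hamming F u v = card {i. i < F \<and> u ! i \<noteq> v ! i}"

definition zeta0 :: "nat \<Rightarrow> (int \<Rightarrow> bool list) \<Rightarrow> int \<Rightarrow> nat" where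
  "zeta0 F \<eta> x = hamming F (\<eta> x) (\<eta> (x + 1))"

text \<open>phi of the edge (x, x+1); X x is the Bernoulli variable attached to that edge.\<close>
definition phi :: "nat \<Rightarrow> nat \<Rightarrow> (int \<Rightarrow> bool list) \<Rightarrow> (int \<Rightarrow> bool) \<Rightarrow> int \<Rightarrow> real" where
  "phi F \<theta> \<eta> X x =
     (if zeta0 F \<eta> x \<le> \<theta> then - real (zeta0 F \<eta> x)
      else real (zeta0 F \<eta> x) + 2 * (of_bool (X x) - real \<theta>))"

text \<open>This is the finite-dimensional marginal of the
  full model; everything else is irrelevant for the event considered.\<close>
definition model :: "nat \<Rightarrow> nat \<Rightarrow> ((int \<Rightarrow> bool list) \<times> (int \<Rightarrow> bool)) pmf" where
  "model F N =
     do { \<eta> \<leftarrow> Pi_pmf {- int N .. 0} [] (\<lambda>_. pmf_of_set (configs F));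
          X \<leftarrow> Pi_pmf {- int N .. -1} False
                 (\<lambda>x. bernoulli_pmf (1 - real (zeta0 F \<eta> x) / real F));
          return_pmf (\<eta>, X) }"

text \<open>E phi(e) (independent of e): mean of phi for the edge (-1,0) in the one-edge model.\<close>
definition Ephi :: "nat \<Rightarrow> nat \<Rightarrow> real" where
  "Ephi F \<theta> = measure_pmf.expectation (model F 1) (\<lambda>(\<eta>, X). phi F \<theta> \<eta> X (-1))"

end

theory Submission
  imports Defs
begin

definition U :: "nat \<Rightarrow> bool list pmf" where "U F = pmf_of_set (configs F)"
definition z0 :: "nat \<Rightarrow> bool list" where "z0 F = replicate F False"

lemma configs_finite: "finite (configs F)"
  unfolding configs_def using finite_lists_length_eq[of "UNIV::bool set" F] by simp
lemma configs_ne: "configs F \<noteq> {}"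
  unfolding configs_def by (auto intro!: exI[of _ "replicate F False"])
lemma set_U[simp]: "set_pmf (U F) = configs F"
  unfolding U_def using configs_finite configs_ne by simp
lemma ham_le: "hamming F u v \<le> F"
  unfolding hamming_def by (rule order_trans[OF card_mono[of "{..<F}"]]) auto

lemma ham_shift:
  assumes "v \<in> configs F" "y \<in> configs F"
  shows "hamming F y v = hamming F (map2 (\<noteq>) y v) (z0 F)"
  unfolding hamming_def z0_def using assms by (auto simp: configs_def intro!: arg_cong[where f=card])

lemma ham_sym_shift:
  assumes "v \<in> configs F"
  shows "(\<integral>\<^sup>+y. K (hamming F y v) \<partial>U F) = (\<integral>\<^sup>+u. K (hamming F u (z0 F)) \<partial>U F)"
proof -
  have "(\<Sum>y\<in>configs F. K (hamming F y v)) = (\<Sum>u\<in>configs F. K (hamming F u (z0 F)))"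
  proof (rule sum.reindex_bij_witness[where i="\<lambda>u. map2 (\<noteq>) u v" and j="\<lambda>u. map2 (\<noteq>) u v"])
    fix a assume "a \<in> configs F" thus "map2 (\<noteq>) (map2 (\<noteq>) a v) v = a"
      using assms by (auto simp: configs_def intro!: nth_equalityI)
  next
    fix a assume "a \<in> configs F" thus "map2 (\<noteq>) a v \<in> configs F"
      using assms by (auto simp: configs_def)
  next
    fix a assume "a \<in> configs F" thus "map2 (\<noteq>) (map2 (\<noteq>) a v) v = a"
      using assms by (auto simp: configs_def intro!: nth_equalityI)
  next
    fix a assume "a \<in> configs F" thus "map2 (\<noteq>) a v \<in> configs F"
      using assms by (auto simp: configs_def)
  next
    fix a assume a: "a \<in> configs F"
    have "map2 (\<noteq>) (map2 (\<noteq>) a v) v \<in> configs F" using a assms by (auto simp: configs_def)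
    thus "K (hamming F (map2 (\<noteq>) a v) (z0 F)) = K (hamming F a v)"
      using ham_shift[OF assms a] by simp
  qed
  thus ?thesis unfolding U_def
    by (simp add: nn_integral_pmf_of_set[OF configs_ne configs_finite])
qed

lemma ivl_insert1: "{- int (Suc N) .. 0} = insert (- int (Suc N)) {- int N .. 0}" by auto
lemma ivl_insert2: "{- int (Suc N) .. -1} = insert (- int (Suc N)) {- int N .. -1}" by auto

lemma chainB:
  "(\<integral>\<^sup>+\<eta>. (\<Prod>x\<in>{- int N .. -1}. K (hamming F (\<eta> x) (\<eta> (x+1)))) \<partial>Pi_pmf {- int N .. 0} [] (\<lambda>_. U F))
   = (\<integral>\<^sup>+u. K (hamming F u (z0 F)) \<partial>U F) ^ N"
proof (induction N)
  case 0
  then show ?case by simp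
next
  case (Suc N)
  define m where "m = (\<integral>\<^sup>+u. K (hamming F u (z0 F)) \<partial>U F)"
  define R where "R = (\<lambda>\<eta>::int\<Rightarrow>bool list. \<Prod>x\<in>{- int N .. -1}. K (hamming F (\<eta> x) (\<eta> (x+1))))"
  let ?a = "- int (Suc N)"
  have A: "(\<Prod>x\<in>{- int (Suc N) .. -1}. K (hamming F ((g(?a:=y)) x) ((g(?a:=y)) (x+1))))
        = K (hamming F y (g (- int N))) * R g" for g y
  proof -
    have "(\<Prod>x\<in>{- int N .. -1}. K (hamming F ((g(?a:=y)) x) ((g(?a:=y)) (x+1)))) = R g"
      unfolding R_def by (intro prod.cong) auto
    moreover have "?a + 1 = - int N" by simp
    ultimately show ?thesis unfolding ivl_insert2 by (subst prod.insert) auto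
  qed
  have "(\<integral>\<^sup>+\<eta>. (\<Prod>x\<in>{- int (Suc N) .. -1}. K (hamming F (\<eta> x) (\<eta> (x+1)))) \<partial>Pi_pmf {- int (Suc N) .. 0} [] (\<lambda>_. U F))
     = (\<integral>\<^sup>+g. \<integral>\<^sup>+y. (\<Prod>x\<in>{- int (Suc N) .. -1}. K (hamming F ((g(?a:=y)) x) ((g(?a:=y)) (x+1)))) \<partial>U F \<partial>Pi_pmf {- int N .. 0} [] (\<lambda>_. U F))"
    unfolding ivl_insert1
    by (subst Pi_pmf_insert, simp, simp, subst pair_commute_pmf, simp only: nn_integral_map_pmf nn_integral_pair_pmf' prod.case)
  also have "\<dots> = (\<integral>\<^sup>+g. \<integral>\<^sup>+y. K (hamming F y (g (- int N))) * R g \<partial>U F \<partial>Pi_pmf {- int N .. 0} [] (\<lambda>_. U F))"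
    by (simp only: A)
  also have "\<dots> = (\<integral>\<^sup>+g. m * R g \<partial>Pi_pmf {- int N .. 0} [] (\<lambda>_. U F))"
  proof (intro nn_integral_cong_AE AE_pmfI)
    fix g assume g: "g \<in> set_pmf (Pi_pmf {- int N .. 0} [] (\<lambda>_. U F))"
    hence "g (- int N) \<in> configs F" by (auto simp: set_Pi_pmf PiE_dflt_def)
    thus "(\<integral>\<^sup>+y. K (hamming F y (g (- int N))) * R g \<partial>U F) = m * R g"
      unfolding m_def by (simp add: nn_integral_multc ham_sym_shift)
  qed
  also have "\<dots> = m * m ^ N" using Suc.IH unfolding R_def m_def by (simp add: nn_integral_cmult)
  finally show ?case unfolding m_def by simp
qed

definition Q :: "nat \<Rightarrow> (bool list \<times> bool) pmf" where
  "Q F = bind_pmf (U F) (\<lambda>u. map_pmf (Pair u) (bernoulli_pmf (1 - real (hamming F u (z0 F)) / real F)))"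

lemma chainP:
  "(\<integral>\<^sup>+p. (\<Prod>x\<in>{- int N .. -1}. G (zeta0 F (fst p) x) (snd p x)) \<partial>model F N)
   = (\<integral>\<^sup>+p. G (hamming F (fst p) (z0 F)) (snd p) \<partial>Q F) ^ N"
proof -
  define K where "K = (\<lambda>z. \<integral>\<^sup>+b. G z b \<partial>bernoulli_pmf (1 - real z / real F))"
  have "(\<integral>\<^sup>+p. (\<Prod>x\<in>{- int N .. -1}. G (zeta0 F (fst p) x) (snd p x)) \<partial>model F N)
     = (\<integral>\<^sup>+\<eta>. (\<integral>\<^sup>+X. (\<Prod>x\<in>{- int N .. -1}. G (zeta0 F \<eta> x) (X x))
          \<partial>Pi_pmf {- int N .. -1} False (\<lambda>x. bernoulli_pmf (1 - real (zeta0 F \<eta> x) / real F)))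
         \<partial>Pi_pmf {- int N .. 0} [] (\<lambda>_. U F))"
    unfolding model_def U_def by (simp add: nn_integral_return)
  also have "\<dots> = (\<integral>\<^sup>+\<eta>. (\<Prod>x\<in>{- int N .. -1}. K (hamming F (\<eta> x) (\<eta> (x+1))))
         \<partial>Pi_pmf {- int N .. 0} [] (\<lambda>_. U F))"
  proof (intro nn_integral_cong)
    fix \<eta> :: "int \<Rightarrow> bool list"
    show "(\<integral>\<^sup>+X. (\<Prod>x\<in>{- int N .. -1}. G (zeta0 F \<eta> x) (X x))
          \<partial>Pi_pmf {- int N .. -1} False (\<lambda>x. bernoulli_pmf (1 - real (zeta0 F \<eta> x) / real F)))
       = (\<Prod>x\<in>{- int N .. -1}. K (hamming F (\<eta> x) (\<eta> (x+1))))"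
      using nn_integral_prod_Pi_pmf[where A="{- int N .. -1}" and f="\<lambda>x b. G (zeta0 F \<eta> x) b"
          and dflt=False and p="\<lambda>x. bernoulli_pmf (1 - real (zeta0 F \<eta> x) / real F)"]
      by (simp add: K_def zeta0_def)
  qed
  also have "\<dots> = (\<integral>\<^sup>+u. K (hamming F u (z0 F)) \<partial>U F) ^ N" by (rule chainB)
  also have "(\<integral>\<^sup>+u. K (hamming F u (z0 F)) \<partial>U F) = (\<integral>\<^sup>+p. G (hamming F (fst p) (z0 F)) (snd p) \<partial>Q F)"
    unfolding Q_def K_def by simp
  finally show ?thesis .
qed

lemma fin_model: "finite (set_pmf (model F N))"
proof (rule finite_subset)
  show "set_pmf (model F N) \<subseteq> PiE_dflt {- int N..0} [] (\<lambda>_. configs F) \<times> PiE_dflt {- int N .. -1} False (\<lambda>_. UNIV)"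
    unfolding model_def U_def[symmetric] by (auto simp: set_Pi_pmf PiE_dflt_def)
  show "finite (PiE_dflt {- int N..0} [] (\<lambda>_. configs F) \<times> PiE_dflt {- int N .. -1} False (\<lambda>_. UNIV::bool set))"
    by (intro finite_cartesian_product finite_PiE_dflt) (auto simp: configs_finite)
qed

lemma fin_Q: "finite (set_pmf (Q F))"
proof (rule finite_subset)
  show "set_pmf (Q F) \<subseteq> configs F \<times> UNIV" unfolding Q_def by auto
  show "finite (configs F \<times> (UNIV::bool set))" by (simp add: configs_finite)
qed

definition psiK :: "nat \<Rightarrow> nat \<Rightarrow> bool \<Rightarrow> real" where
  "psiK \<theta> z b = (if z \<le> \<theta> then - real z else real z + 2 * (of_bool b - real \<theta>))"

lemma phi_psi: "phi F \<theta> \<eta> X x = psiK \<theta> (zeta0 F \<eta> x) (X x)"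
  by (simp add: phi_def psiK_def)

lemma psi_bounds: "z \<le> F \<Longrightarrow> -(real F + 2*real \<theta>) \<le> psiK \<theta> z b \<and> psiK \<theta> z b \<le> real F + 2"
  unfolding psiK_def by (cases b) auto

lemma zeta_le: "zeta0 F \<eta> x \<le> F" unfolding zeta0_def by (rule ham_le)

lemma psi_lo_z: "0 \<le> psiK \<theta> (zeta0 F \<eta> x) b + (real F + 2*real \<theta>)"
  using psi_bounds[OF zeta_le[of F \<eta> x], of \<theta> b] by linarith
lemma psi_lo_h: "0 \<le> psiK \<theta> (hamming F u v) b + (real F + 2*real \<theta>)"
  using psi_bounds[OF ham_le[of F u v], of \<theta> b] by linarith

lemma Ephi_Q: "Ephi F \<theta> = measure_pmf.expectation (Q F) (\<lambda>p. psiK \<theta> (hamming F (fst p) (z0 F)) (snd p))"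
proof -
  define c where "c = real F + 2*real \<theta>"
  have 1: "(\<integral>\<^sup>+p. ennreal (psiK \<theta> (zeta0 F (fst p) (-1)) (snd p (-1)) + c) \<partial>model F 1)
      = (\<integral>\<^sup>+p. ennreal (psiK \<theta> (hamming F (fst p) (z0 F)) (snd p) + c) \<partial>Q F)"
    using chainP[where G="\<lambda>z b. ennreal (psiK \<theta> z b + c)" and N=1 and F=F] by simp
  have 2: "(\<integral>\<^sup>+p. ennreal (psiK \<theta> (zeta0 F (fst p) (-1)) (snd p (-1)) + c) \<partial>model F 1)
     = ennreal (measure_pmf.expectation (model F 1) (\<lambda>p. psiK \<theta> (zeta0 F (fst p) (-1)) (snd p (-1)) + c))"
    unfolding c_def using psi_lo_z
    by (intro nn_integral_eq_integral integrable_measure_pmf_finite fin_model AE_pmfI)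
       auto
  have 3: "(\<integral>\<^sup>+p. ennreal (psiK \<theta> (hamming F (fst p) (z0 F)) (snd p) + c) \<partial>Q F)
     = ennreal (measure_pmf.expectation (Q F) (\<lambda>p. psiK \<theta> (hamming F (fst p) (z0 F)) (snd p) + c))"
    unfolding c_def using psi_lo_h
    by (intro nn_integral_eq_integral integrable_measure_pmf_finite fin_Q AE_pmfI)
       auto
  have n1: "measure_pmf.expectation (model F 1) (\<lambda>p. psiK \<theta> (zeta0 F (fst p) (-1)) (snd p (-1)) + c) \<ge> 0"
    unfolding c_def using psi_lo_z
    by (intro Bochner_Integration.integral_nonneg) auto
  have n2: "measure_pmf.expectation (Q F) (\<lambda>p. psiK \<theta> (hamming F (fst p) (z0 F)) (snd p) + c) \<ge> 0"
    unfolding c_def using psi_lo_h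
    by (intro Bochner_Integration.integral_nonneg) auto
  have "measure_pmf.expectation (model F 1) (\<lambda>p. psiK \<theta> (zeta0 F (fst p) (-1)) (snd p (-1)) + c)
      = measure_pmf.expectation (Q F) (\<lambda>p. psiK \<theta> (hamming F (fst p) (z0 F)) (snd p) + c)"
    using 1 2 3 n1 n2 by simp
  moreover have "measure_pmf.expectation (model F 1) (\<lambda>p. psiK \<theta> (zeta0 F (fst p) (-1)) (snd p (-1)) + c)
     = Ephi F \<theta> + c"
    unfolding Ephi_def phi_psi
    by (subst Bochner_Integration.integral_add) (auto intro: integrable_measure_pmf_finite fin_model simp: case_prod_beta split_beta')
  moreover have "measure_pmf.expectation (Q F) (\<lambda>p. psiK \<theta> (hamming F (fst p) (z0 F)) (snd p) + c)
     = measure_pmf.expectation (Q F) (\<lambda>p. psiK \<theta> (hamming F (fst p) (z0 F)) (snd p)) + c"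
    by (subst Bochner_Integration.integral_add) (auto intro: integrable_measure_pmf_finite fin_Q)
  ultimately show ?thesis by simp
qed

lemma mgf_bound:
  assumes l: "l > 0"
  shows "(\<integral>\<^sup>+p. ennreal (exp (l * (Ephi F \<theta> - psiK \<theta> (hamming F (fst p) (z0 F)) (snd p)))) \<partial>Q F)
     \<le> ennreal (exp (l\<^sup>2 * (2*real F + 2*real \<theta> + 2)\<^sup>2 / 8))"
proof -
  interpret H: interval_bounded_random_variable "measure_pmf (Q F)"
    "\<lambda>p. - psiK \<theta> (hamming F (fst p) (z0 F)) (snd p)" "-(real F + 2)" "real F + 2*real \<theta>"
  proof unfold_locales
    show "AE x in measure_pmf (Q F). - psiK \<theta> (hamming F (fst x) (z0 F)) (snd x) \<in> {- (real F + 2)..real F + 2 * real \<theta>}"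
    proof (intro AE_pmfI)
      fix x :: "bool list \<times> bool"
      show "- psiK \<theta> (hamming F (fst x) (z0 F)) (snd x) \<in> {- (real F + 2)..real F + 2 * real \<theta>}"
        using psi_bounds[OF ham_le[of F "fst x" "z0 F"], of \<theta> "snd x"] by auto
    qed
  qed simp
  have E: "measure_pmf.expectation (Q F) (\<lambda>p. - psiK \<theta> (hamming F (fst p) (z0 F)) (snd p)) = - Ephi F \<theta>"
    by (simp add: Ephi_Q)
  have "(\<integral>\<^sup>+p. ennreal (exp (l * (- psiK \<theta> (hamming F (fst p) (z0 F)) (snd p)
        - measure_pmf.expectation (Q F) (\<lambda>p. - psiK \<theta> (hamming F (fst p) (z0 F)) (snd p))))) \<partial>Q F)
     \<le> ennreal (exp (l\<^sup>2 * (real F + 2*real \<theta> - (-(real F + 2)))\<^sup>2 / 8))"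
    by (rule H.Hoeffdings_lemma_nn_integral[OF l])
  moreover have "real F + 2*real \<theta> - (-(real F + 2)) = 2*real F + 2*real \<theta> + 2" by simp
  ultimately show ?thesis unfolding E by (simp add: algebra_simps)
qed

theorem lemma3:
  fixes F \<theta> :: nat
  assumes "F \<ge> 1" and "\<theta> \<ge> 1"
  shows "\<exists>C1 c1 :: real. c1 > 0 \<and>
    (\<forall>\<epsilon> :: real. \<forall>N :: nat. \<epsilon> > 0 \<longrightarrow> N \<ge> 1 \<longrightarrow>
       measure_pmf.prob (model F N)
         {(\<eta>, X). (\<Sum>x\<in>{- int N .. -1}. phi F \<theta> \<eta> X x) \<le> real N * (Ephi F \<theta> - \<epsilon>)}
       \<le> C1 * exp (- c1 * real N * \<epsilon>\<^sup>2))"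
proof -
  define W where "W = 2*real F + 2*real \<theta> + 2"
  have W: "W > 0" unfolding W_def by simp
  show ?thesis
  proof (rule exI[of _ "1::real"], rule exI[of _ "2 / W\<^sup>2"], intro conjI allI impI)
    show "0 < 2 / W\<^sup>2" using W by simp
  next
    fix \<epsilon> :: real and N :: nat assume \<epsilon>: "\<epsilon> > 0" and N: "N \<ge> 1"
    define l where "l = 4*\<epsilon>/W\<^sup>2"
    have l: "l > 0" unfolding l_def using \<epsilon> W by simp
    define \<mu> where "\<mu> = Ephi F \<theta>"
    define I where "I = {- int N .. -1}"
    have cardI: "card I = N" unfolding I_def by simp
    define A where "A = {(\<eta>, X). (\<Sum>x\<in>{- int N .. -1}. phi F \<theta> \<eta> X x) \<le> real N * (Ephi F \<theta> - \<epsilon>)}"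
    define S where "S = (\<lambda>p::(int\<Rightarrow>bool list)\<times>(int\<Rightarrow>bool). \<Sum>x\<in>I. psiK \<theta> (zeta0 F (fst p) x) (snd p x))"
    define g where "g = (\<lambda>p::(int\<Rightarrow>bool list)\<times>(int\<Rightarrow>bool). ennreal (exp (-l*N*\<epsilon>)) *
        (\<Prod>x\<in>I. ennreal (exp (l*(\<mu> - psiK \<theta> (zeta0 F (fst p) x) (snd p x))))))"
    have gS: "g p = ennreal (exp (l * (N*(\<mu>-\<epsilon>) - S p)))" for p
    proof -
      have "(\<Prod>x\<in>I. ennreal (exp (l*(\<mu> - psiK \<theta> (zeta0 F (fst p) x) (snd p x)))))
          = ennreal (exp (\<Sum>x\<in>I. l*(\<mu> - psiK \<theta> (zeta0 F (fst p) x) (snd p x))))"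
        by (simp add: prod_ennreal exp_sum I_def)
      moreover have "(\<Sum>x\<in>I. l*(\<mu> - psiK \<theta> (zeta0 F (fst p) x) (snd p x))) = l * (N*\<mu> - S p)"
        unfolding S_def by (simp add: sum_subtractf sum_distrib_left[symmetric] cardI)
      ultimately show ?thesis unfolding g_def
        by (simp add: ennreal_mult'[symmetric] exp_add[symmetric] algebra_simps)
    qed
    have ind: "indicator A p \<le> g p" for p
    proof (cases "p \<in> A")
      case True
      hence "S p \<le> N*(\<mu>-\<epsilon>)" unfolding A_def S_def I_def \<mu>_def by (auto simp: phi_psi)
      hence "0 \<le> l * (N*(\<mu>-\<epsilon>) - S p)" using l by simp
      hence "1 \<le> exp (l * (N*(\<mu>-\<epsilon>) - S p))" by simp
      thus ?thesis using True gS by simp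
    qed (simp add: gS)
    have "ennreal (measure_pmf.prob (model F N) A) = emeasure (model F N) A"
      by (simp add: measure_pmf.emeasure_eq_measure)
    also have "\<dots> = (\<integral>\<^sup>+p. indicator A p \<partial>model F N)" by simp
    also have "\<dots> \<le> (\<integral>\<^sup>+p. g p \<partial>model F N)" by (intro nn_integral_mono ind)
    also have "\<dots> = ennreal (exp (-l*N*\<epsilon>)) *
       (\<integral>\<^sup>+p. (\<Prod>x\<in>{- int N .. -1}. ennreal (exp (l*(\<mu> - psiK \<theta> (zeta0 F (fst p) x) (snd p x))))) \<partial>model F N)"
      unfolding g_def I_def by (simp add: nn_integral_cmult)
    also have "(\<integral>\<^sup>+p. (\<Prod>x\<in>{- int N .. -1}. ennreal (exp (l*(\<mu> - psiK \<theta> (zeta0 F (fst p) x) (snd p x))))) \<partial>model F N)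
       = (\<integral>\<^sup>+p. ennreal (exp (l*(\<mu> - psiK \<theta> (hamming F (fst p) (z0 F)) (snd p)))) \<partial>Q F) ^ N"
      by (rule chainP[where G="\<lambda>z b. ennreal (exp (l*(\<mu> - psiK \<theta> z b)))"])
    also have "ennreal (exp (-l*N*\<epsilon>)) * \<dots> \<le> ennreal (exp (-l*N*\<epsilon>)) * ennreal (exp (l\<^sup>2 * W\<^sup>2 / 8)) ^ N"
      using mgf_bound[OF l, of F \<theta>] unfolding \<mu>_def W_def
      by (intro mult_left_mono power_mono) auto
    also have "\<dots> = ennreal (exp (-l*N*\<epsilon>) * exp (l\<^sup>2 * W\<^sup>2 / 8) ^ N)"
      by (simp add: ennreal_mult' ennreal_power)
    also have "exp (-l*N*\<epsilon>) * exp (l\<^sup>2 * W\<^sup>2 / 8) ^ N = exp (-l*N*\<epsilon> + N * (l\<^sup>2 * W\<^sup>2 / 8))"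
      by (simp only: exp_of_nat_mult[symmetric] exp_add[symmetric])
    also have "-l*N*\<epsilon> + N * (l\<^sup>2 * W\<^sup>2 / 8) = - (2 / W\<^sup>2) * real N * \<epsilon>\<^sup>2"
      unfolding l_def using W by (simp add: field_simps power2_eq_square)
    finally have "ennreal (measure_pmf.prob (model F N) A) \<le> ennreal (exp (- (2 / W\<^sup>2) * real N * \<epsilon>\<^sup>2))" .
    hence "measure_pmf.prob (model F N) A \<le> exp (- (2 / W\<^sup>2) * real N * \<epsilon>\<^sup>2)"
      by (simp add: ennreal_le_iff)
    thus "measure_pmf.prob (model F N)
         {(\<eta>, X). (\<Sum>x\<in>{- int N .. -1}. phi F \<theta> \<eta> X x) \<le> real N * (Ephi F \<theta> - \<epsilon>)}
       \<le> 1 * exp (- (2 / W\<^sup>2) * real N * \<epsilon>\<^sup>2)" unfolding A_def by simp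
  qed
qed

end
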